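(* Let $G=(L\cup R,E)$ be a left-regular Tanner graph (without parallel edges) with left degree $d_l\ge 3$ and girth $g>4$. Let $\mathcal{S}\subset L$ be an $(a,b)$ trapping set with $b<a$ and $G(\mathcal{S})$ connected. Consider three cases: (E) $\mathcal{S}$ is elementary and $d_l(d_l-1)>b$; (O) $\mathcal{S}$ has a check node in $\Gamma_{\mathrm{o}}(\mathcal{S})$ of degree $d_o>1$ in $G(\mathcal{S})$, and $d_o(d_l-1)>b$; (Ev) $\mathcal{S}$ has a check node in $\Gamma_{\mathrm{e}}(\mathcal{S})$ of degree $d_e>2$ in $G(\mathcal{S})$, and $d_e(d_l-1)>b$. (Empty sums are $0$.) (a) If $g=4k$ for an integer $k>1$, then in case (E) \[a\ge 1+d_l+(d_l(d_l-1)-b)\sum_{i=0}^{k-3}(d_l-1)^i+\frac{(d_l(d_l-1)-b)(d_l-1)^{k-2}}{d_l};\] in case (O) $a\ge d_o+(d_o(d_l-1)-b+1)\sum_{i=0}^{k-2}(d_l-1)^i$; and in case (Ev) $a\ge d_e+(d_e(d_l-1)-b)\sum_{i=0}^{k-2}(d_l-1)^i$. (b) If $g=4k+2$ for a positive integer $k$, then in case (E) $a\ge 1+d_l+(d_l(d_l-1)-b)\sum_{i=0}^{k-2}(d_l-1)^i$; in case (O) \[a\ge d_o+(d_o(d_l-1)-b+1)\sum_{i=0}^{k-2}(d_l-1)^i+\frac{(d_o(d_l-1)-b+1)(d_l-1)^{k-1}}{d_l};\] and in case (Ev) \[a\ge d_e+(d_e(d_l-1)-b)\sum_{i=0}^{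k-2}(d_l-1)^i+\frac{(d_e(d_l-1)-b)(d_l-1)^{k-1}}{d_l}.\]
   Context: A Tanner graph is a bipartite graph $G=(L\cup R,E)$ with variable nodes $L$ and check nodes $R$; left-regular with left degree $d_l$ means every variable node has degree $d_l$; the girth is the length of a shortest cycle. For $\mathcal{S}\subset L$, $\Gamma(\mathcal{S})$ is the set of neighbors of $\mathcal{S}$ in $R$, and $G(\mathcal{S})$ is the induced subgraph on $\mathcal{S}\cup\Gamma(\mathcal{S})$. $\Gamma_{\mathrm{o}}(\mathcal{S})$ and $\Gamma_{\mathrm{e}}(\mathcal{S})$ are the check nodes of $\Gamma(\mathcal{S})$ with odd, respectively even, degree in $G(\mathcal{S})$. $\mathcal{S}$ is an $(a,b)$ trapping set if $|\mathcal{S}|=a$ and $|\Gamma_{\mathrm{o}}(\mathcal{S})|=b$; it is elementary if every check node of $G(\mathcal{S})$ has degree one or two in $G(\mathcal{S})$. *)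

theory Defs
  imports Complex_Main
begin

text \<open>A Tanner graph: variable nodes L, check nodes R, edge set E \<subseteq> L \<times> R
  (a set of pairs, hence no parallel edges).\<close>

definition tanner_graph :: "'v set \<Rightarrow> 'c set \<Rightarrow> ('v \<times> 'c) set \<Rightarrow> bool" where
  "tanner_graph L R E \<longleftrightarrow> finite L \<and> finite R \<and> E \<subseteq> L \<times> R"

definition left_regular :: "'v set \<Rightarrow> ('v \<times> 'c) set \<Rightarrow> nat \<Rightarrow> bool" where
  "left_regular L E dl \<longleftrightarrow> (\<forall>v\<in>L. card {c. (v, c) \<in> E} = dl)"

fun tadj :: "('v \<times> 'c) set \<Rightarrow> ('v + 'c) \<Rightarrow> ('v + 'c) \<Rightarrow> bool" where
  "tadj E (Inl v) (Inr c) \<longleftrightarrow> (v, c) \<in> E"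
| "tadj E (Inr c) (Inl v) \<longleftrightarrow> (v, c) \<in> E"
| "tadj E _ _ \<longleftrightarrow> False"

definition is_cycle :: "('v \<times> 'c) set \<Rightarrow> ('v + 'c) list \<Rightarrow> bool" where
  "is_cycle E xs \<longleftrightarrow> length xs \<ge> 3 \<and> distinct xs \<and>
     (\<forall>i < length xs. tadj E (xs ! i) (xs ! ((i + 1) mod length xs)))"

definition has_girth :: "('v \<times> 'c) set \<Rightarrow> nat \<Rightarrow> bool" where
  "has_girth E g \<longleftrightarrow> (\<exists>xs. is_cycle E xs \<and> length xs = g) \<and>
     (\<forall>xs. is_cycle E xs \<longrightarrow> g \<le> length xs)"

definition nbhd :: "('v \<times> 'c) set \<Rightarrow> 'v set \<Rightarrow> 'c set" where
  "nbhd E S = {c. \<exists>v\<in>S. (v, c) \<in> E}"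

definition sdeg :: "('v \<times> 'c) set \<Rightarrow> 'v set \<Rightarrow> 'c \<Rightarrow> nat" where
  "sdeg E S c = card {v\<in>S. (v, c) \<in> E}"

definition odd_nbhd :: "('v \<times> 'c) set \<Rightarrow> 'v set \<Rightarrow> 'c set" where
  "odd_nbhd E S = {c\<in>nbhd E S. odd (sdeg E S c)}"

definition even_nbhd :: "('v \<times> 'c) set \<Rightarrow> 'v set \<Rightarrow> 'c set" where
  "even_nbhd E S = {c\<in>nbhd E S. even (sdeg E S c)}"

definition trapping_set :: "'v set \<Rightarrow> ('v \<times> 'c) set \<Rightarrow> 'v set \<Rightarrow> nat \<Rightarrow> nat \<Rightarrow> bool" where
  "trapping_set L E S a b \<longleftrightarrow> S \<subseteq> L \<and> card S = a \<and> card (odd_nbhd E S) = b"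

definition elementary :: "('v \<times> 'c) set \<Rightarrow> 'v set \<Rightarrow> bool" where
  "elementary E S \<longleftrightarrow> (\<forall>c\<in>nbhd E S. sdeg E S c = 1 \<or> sdeg E S c = 2)"

definition induced_connected :: "('v \<times> 'c) set \<Rightarrow> 'v set \<Rightarrow> bool" where
  "induced_connected E S \<longleftrightarrow>
     (let V = Inl ` S \<union> Inr ` nbhd E S in
      \<forall>x\<in>V. \<forall>y\<in>V. (\<lambda>u w. u \<in> V \<and> w \<in> V \<and> tadj E u w)\<^sup>*\<^sup>* x y)"

end

theory Submission imports Defs begin

lemma tadj_irrefl: "\<not> tadj E x x" by (cases x) auto
lemma tadj_sym: "tadj E x y = tadj E y x" by (cases x; cases y) auto

definition walk :: "('v \<times> 'c) set \<Rightarrow> ('v + 'c) list \<Rightarrow> bool" where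
  "walk E xs \<longleftrightarrow> xs \<noteq> [] \<and> (\<forall>i. Suc i < length xs \<longrightarrow> tadj E (xs!i) (xs!Suc i))"
definition nbt :: "'a list \<Rightarrow> bool" where
  "nbt xs \<longleftrightarrow> (\<forall>i. Suc (Suc i) < length xs \<longrightarrow> xs!i \<noteq> xs!Suc (Suc i))"

lemma cyc_aux:
  "\<forall>i j. j - i = n \<longrightarrow> walk E xs \<longrightarrow> nbt xs \<longrightarrow> i < j \<longrightarrow> j < length xs \<longrightarrow> xs!i = xs!j
    \<longrightarrow> (\<exists>cy. is_cycle E cy \<and> length cy \<le> n)"
proof (induction n rule: less_induct)
  case (less n)
  show ?case
  proof (intro allI impI)
    fix i j assume n: "j - i = n" and w: "walk E xs" and nb: "nbt xs" and ij: "i < j" "j < length xs"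
      and eq: "xs!i = xs!j"
    show "\<exists>cy. is_cycle E cy \<and> length cy \<le> n"
    proof (cases "\<exists>i' j'. i \<le> i' \<and> i' < j' \<and> j' \<le> j \<and> (i', j') \<noteq> (i, j) \<and> xs!i' = xs!j'")
      case True
      then obtain i' j' where h: "i \<le> i'" "i' < j'" "j' \<le> j" "(i', j') \<noteq> (i, j)" "xs!i' = xs!j'"
        by blast
      have lt: "j' - i' < n" using h n by auto
      have jl: "j' < length xs" using h ij by auto
      have "\<exists>cy. is_cycle E cy \<and> length cy \<le> j' - i'"
        using less.IH[OF lt] h(2,5) w nb jl by blast
      then obtain cy where "is_cycle E cy" "length cy \<le> j' - i'" by auto
      then show ?thesis using lt by (intro exI[of _ cy]) auto
    next
      case False
      define cy where "cy = take (j - i) (drop i xs)"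
      have len: "length cy = n" using ij n by (simp add: cy_def)
      have nth: "\<And>t. t < n \<Longrightarrow> cy!t = xs!(i+t)" using ij n by (simp add: cy_def)
      have wa: "\<And>t. Suc t < length xs \<Longrightarrow> tadj E (xs!t) (xs!Suc t)" using w by (simp add: walk_def)
      have n1: "n \<noteq> 1"
      proof
        assume "n = 1"
        then have "j = Suc i" using n ij by auto
        then show False using wa[of i] ij eq tadj_irrefl by metis
      qed
      have n2: "n \<noteq> 2"
      proof
        assume "n = 2"
        then have "j = Suc (Suc i)" using n ij by auto
        then show False using nb ij eq unfolding nbt_def by auto
      qed
      have n3: "n \<ge> 3" using n1 n2 n ij by auto
      have dist: "distinct cy"
        unfolding distinct_conv_nth
      proof (intro allI impI)
        fix a b assume ab: "a < length cy" "b < length cy" "a \<noteq> b"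
        show "cy!a \<noteq> cy!b"
        proof
          assume e: "cy!a = cy!b"
          show False
          proof (cases "a < b")
            case True
            have "i \<le> i+a" "i+a < i+b" "i+b \<le> j" "(i+a, i+b) \<noteq> (i, j)" "xs!(i+a) = xs!(i+b)"
              using True ab e nth len n ij by auto
            then show False using False by blast
          next
            case False2: False
            then have "b < a" using ab by auto
            have "i \<le> i+b" "i+b < i+a" "i+a \<le> j" "(i+b, i+a) \<noteq> (i, j)" "xs!(i+b) = xs!(i+a)"
              using \<open>b < a\<close> ab e nth len n ij by auto
            then show False using False by blast
          qed
        qed
      qed
      have adj: "\<forall>t < length cy. tadj E (cy ! t) (cy ! ((t + 1) mod length cy))"
      proof (intro allI impI)
        fix t assume t: "t < length cy"
        show "tadj E (cy ! t) (cy ! ((t + 1) mod length cy))"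
        proof (cases "t + 1 < n")
          case True
          then show ?thesis using t len nth wa[of "i+t"] n ij by auto
        next
          case False
          then have "t + 1 = n" using t len by auto
          then have "(t+1) mod length cy = 0" using len by auto
          moreover have "i + t = j - 1" "Suc (j - 1) = j" using \<open>t+1 = n\<close> n ij by auto
          moreover have "cy!t = xs!(j-1)" using nth[of t] \<open>i + t = j - 1\<close> \<open>t+1=n\<close> by auto
          moreover have "cy!0 = xs!j" using nth[of 0] eq n3 by auto
          moreover have "tadj E (xs!(j-1)) (xs!j)" using wa[of "j - 1"] \<open>Suc (j - 1) = j\<close> ij by auto
          ultimately show ?thesis by simp
        qed
      qed
      show ?thesis using dist adj len n3 by (intro exI[of _ cy]) (auto simp: is_cycle_def)
    qed
  qed
qed

lemma cyc_from_repeat: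
  assumes "walk E xs" "nbt xs" "i < j" "j < length xs" "xs!i = xs!j"
  shows "\<exists>cy. is_cycle E cy \<and> length cy \<le> j - i"
  using cyc_aux[of "j - i" E xs] assms by blast


lemma walk_butlast: "walk E xs \<Longrightarrow> length xs \<ge> 2 \<Longrightarrow> walk E (butlast xs)"
proof -
  assume a: "walk E xs" "length xs \<ge> 2"
  then have "length (butlast xs) \<ge> 1" by simp
  then have "butlast xs \<noteq> []" by (metis length_0_conv not_one_le_zero)
  then show ?thesis using a unfolding walk_def by (auto simp: nth_butlast)
qed

lemma nbt_butlast: "nbt xs \<Longrightarrow> nbt (butlast xs)"
  unfolding nbt_def by (auto simp: nth_butlast)

lemma walk_rev: "walk E xs \<Longrightarrow> walk E (rev xs)"
  unfolding walk_def
proof (intro conjI allI impI)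
  assume a: "xs \<noteq> [] \<and> (\<forall>i. Suc i < length xs \<longrightarrow> tadj E (xs ! i) (xs ! Suc i))"
  then show "rev xs \<noteq> []" by simp
  fix i assume i: "Suc i < length (rev xs)"
  have e: "length xs - Suc i = Suc (length xs - Suc (Suc i))" using i by auto
  have "tadj E (xs ! (length xs - Suc (Suc i))) (xs ! Suc (length xs - Suc (Suc i)))"
    using a i by auto
  then show "tadj E (rev xs ! i) (rev xs ! Suc i)"
    using i e by (simp add: rev_nth tadj_sym)
qed

lemma nbt_rev: "nbt xs \<Longrightarrow> nbt (rev xs)"
  unfolding nbt_def
proof (intro allI impI)
  fix i assume a: "\<forall>i. Suc (Suc i) < length xs \<longrightarrow> xs ! i \<noteq> xs ! Suc (Suc i)"
    and i: "Suc (Suc i) < length (rev xs)"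
  have e: "length xs - Suc i = Suc (Suc (length xs - Suc (Suc (Suc i))))" using i by auto
  have "xs ! (length xs - Suc (Suc (Suc i))) \<noteq> xs ! Suc (Suc (length xs - Suc (Suc (Suc i))))"
    using a i by auto
  then show "rev xs ! i \<noteq> rev xs ! Suc (Suc i)"
    using i e by (simp add: rev_nth)
qed

lemma walk_append:
  assumes "walk E xs" "walk E ys" "tadj E (last xs) (hd ys)"
  shows "walk E (xs @ ys)"
  unfolding walk_def
proof (intro conjI allI impI)
  show "xs @ ys \<noteq> []" using assms(1) by (simp add: walk_def)
  fix i assume i: "Suc i < length (xs @ ys)"
  have wx: "\<And>i. Suc i < length xs \<Longrightarrow> tadj E (xs!i) (xs!Suc i)" using assms(1) by (simp add: walk_def)
  have wy: "\<And>i. Suc i < length ys \<Longrightarrow> tadj E (ys!i) (ys!Suc i)" using assms(2) by (simp add: walk_def)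
  have ne: "xs \<noteq> []" "ys \<noteq> []" using assms by (auto simp: walk_def)
  consider "Suc i < length xs" | "Suc i = length xs" | "Suc i > length xs" by linarith
  then show "tadj E ((xs @ ys) ! i) ((xs @ ys) ! Suc i)"
  proof cases
    case 1 then show ?thesis using wx[of i] by (simp add: nth_append)
  next
    case 2
    then have "i = length xs - 1" by auto
    then show ?thesis using assms(3) ne 2 by (simp add: nth_append last_conv_nth hd_conv_nth)
  next
    case 3
    then have "Suc (i - length xs) < length ys" "Suc i - length xs = Suc (i - length xs)" using i by auto
    then show ?thesis using wy[of "i - length xs"] 3 by (simp add: nth_append)
  qed
qed

lemma nbt_append:
  assumes "nbt xs" "nbt ys" "xs \<noteq> []" "ys \<noteq> []"
    "length xs \<ge> 2 \<Longrightarrow> xs!(length xs - 2) \<noteq> hd ys"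
    "length ys \<ge> 2 \<Longrightarrow> last xs \<noteq> ys!1"
  shows "nbt (xs @ ys)"
  unfolding nbt_def
proof (intro allI impI)
  fix i assume i: "Suc (Suc i) < length (xs @ ys)"
  have nx: "\<And>i. Suc (Suc i) < length xs \<Longrightarrow> xs!i \<noteq> xs!Suc (Suc i)" using assms(1) by (simp add: nbt_def)
  have ny: "\<And>i. Suc (Suc i) < length ys \<Longrightarrow> ys!i \<noteq> ys!Suc (Suc i)" using assms(2) by (simp add: nbt_def)
  consider "Suc (Suc i) < length xs" | "Suc (Suc i) = length xs" | "Suc i = length xs" | "i \<ge> length xs" by linarith
  then show "(xs @ ys) ! i \<noteq> (xs @ ys) ! Suc (Suc i)"
  proof cases
    case 1 then show ?thesis using nx[of i] by (simp add: nth_append)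
  next
    case 2
    then have "i = length xs - 2" by auto
    then show ?thesis using assms(5) 2 assms(4) by (simp add: nth_append hd_conv_nth)
  next
    case 3
    then have "i = length xs - 1" "length ys \<ge> 2" using i by auto
    then show ?thesis using assms(6) 3 assms(3) by (simp add: nth_append last_conv_nth numeral_2_eq_2)
  next
    case 4
    then have "Suc (Suc (i - length xs)) < length ys" "Suc (Suc i) - length xs = Suc (Suc (i - length xs))" using i by auto
    then show ?thesis using ny[of "i - length xs"] 4 by (simp add: nth_append)
  qed
qed


lemma closed_walk_cycle:
  assumes "walk E q" "nbt q" "hd q = last q" "length q \<ge> 2"
  shows "\<exists>cy. is_cycle E cy \<and> length cy + 1 \<le> length q"
proof -
  have ne: "q \<noteq> []" using assms by auto
  have "q!0 = q!(length q - 1)" using assms(3) ne by (simp add: hd_conv_nth last_conv_nth)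
  then obtain cy where "is_cycle E cy" "length cy \<le> length q - 1 - 0"
    using cyc_from_repeat[OF assms(1,2), of 0 "length q - 1"] assms(4) by fastforce
  then show ?thesis using assms(4) by (intro exI[of _ cy]) auto
qed

lemma two_walks_cycle:
  "walk E p \<Longrightarrow> nbt p \<Longrightarrow> walk E q \<Longrightarrow> nbt q \<Longrightarrow> hd p = hd q \<Longrightarrow> last p = last q \<Longrightarrow> p \<noteq> q \<Longrightarrow>
   \<exists>cy. is_cycle E cy \<and> length cy + 2 \<le> length p + length q"
proof (induction "length p + length q" arbitrary: p q rule: less_induct)
  case less
  have pne: "p \<noteq> []" and qne: "q \<noteq> []" using less.prems by (auto simp: walk_def)
  consider "length p = 1" | "length q = 1" | "length p \<ge> 2" "length q \<ge> 2"
  proof -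
    have "length p > 0" "length q > 0" using pne qne by auto
    then show "\<And>thesis. (length p = 1 \<Longrightarrow> thesis) \<Longrightarrow> (length q = 1 \<Longrightarrow> thesis) \<Longrightarrow> (length p \<ge> 2 \<Longrightarrow> length q \<ge> 2 \<Longrightarrow> thesis) \<Longrightarrow> thesis"
      by linarith
  qed
  then show ?case
  proof cases
    case 1
    then obtain u where pu: "p = [u]" by (cases p) auto
    have "length q \<noteq> 1"
    proof
      assume "length q = 1"
      then obtain u' where "q = [u']" by (cases q) auto
      then show False using less.prems pu by auto
    qed
    moreover have "length q > 0" using qne by auto
    ultimately have "length q \<ge> 2" by linarith
    moreover have "hd q = last q" using less.prems pu by auto
    ultimately show ?thesis using closed_walk_cycle[of E q] less.prems pu by fastforce
  next
    case 2
    then obtain u where pu: "q = [u]" by (cases q) auto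
    have "length p \<noteq> 1"
    proof
      assume "length p = 1"
      then obtain u' where "p = [u']" by (cases p) auto
      then show False using less.prems pu by auto
    qed
    moreover have "length p > 0" using pne by auto
    ultimately have "length p \<ge> 2" by linarith
    moreover have "hd p = last p" using less.prems pu by auto
    ultimately show ?thesis using closed_walk_cycle[of E p] less.prems pu by fastforce
  next
    case 3
    show ?thesis
    proof (cases "p!(length p - 2) = q!(length q - 2)")
      case True
      define p' where "p' = butlast p"
      define q' where "q' = butlast q"
      have lp: "length p' = length p - 1" "length q' = length q - 1" by (auto simp: p'_def q'_def)
      have ne': "p' \<noteq> []" "q' \<noteq> []" using 3 lp by auto
      have "p = p' @ [last p]" "q = q' @ [last q]" using pne qne by (auto simp: p'_def q'_def)
      then have neq: "p' \<noteq> q'" using less.prems by metis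
      have hd': "hd p' = hd q'" using less.prems ne' \<open>p = p' @ [last p]\<close> \<open>q = q' @ [last q]\<close>
        by (metis hd_append2)
      have "last p' = p!(length p - 2)" using ne' lp 3 unfolding p'_def
        by (simp add: last_conv_nth nth_butlast numeral_2_eq_2)
      moreover have "last q' = q!(length q - 2)" using ne' lp 3 unfolding q'_def
        by (simp add: last_conv_nth nth_butlast numeral_2_eq_2)
      ultimately have last': "last p' = last q'" using True by simp
      have "\<exists>cy. is_cycle E cy \<and> length cy + 2 \<le> length p' + length q'"
        apply (rule less.hyps)
        using lp 3 apply simp
        using walk_butlast nbt_butlast less.prems 3 hd' last' neq unfolding p'_def q'_def by auto
      then show ?thesis using lp by auto
    next
      case False
      define z where "z = butlast p @ rev q"
      have lbp: "length (butlast p) = length p - 1" by simp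
      have bpne: "butlast p \<noteq> []" using 3 by (cases p) auto
      have lastp: "last p = p!(length p - 1)" using pne by (simp add: last_conv_nth)
      have lbl: "last (butlast p) = p!(length p - 2)" using bpne 3
        by (simp add: last_conv_nth nth_butlast numeral_2_eq_2)
      have w: "walk E z" unfolding z_def
      proof (rule walk_append)
        show "walk E (butlast p)" using walk_butlast less.prems 3 by auto
        show "walk E (rev q)" using walk_rev less.prems by auto
        have "tadj E (p!(length p - 2)) (p!Suc (length p - 2))"
          using less.prems(1) 3 unfolding walk_def by auto
        moreover have "Suc (length p - 2) = length p - 1" using 3 by auto
        ultimately show "tadj E (last (butlast p)) (hd (rev q))"
          using lbl lastp less.prems qne by (simp add: hd_rev)
      qed
      have nb: "nbt z" unfolding z_def
      proof (rule nbt_append)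
        show "nbt (butlast p)" using nbt_butlast less.prems by auto
        show "nbt (rev q)" using nbt_rev less.prems by auto
        show "butlast p \<noteq> []" by fact
        show "rev q \<noteq> []" using qne by simp
        assume l2: "length (butlast p) \<ge> 2"
        have "p!(length p - 3) \<noteq> p!Suc (Suc (length p - 3))"
          using less.prems(2) l2 unfolding nbt_def by auto
        moreover have "Suc (Suc (length p - 3)) = length p - 1" using l2 by auto
        moreover have "butlast p ! (length (butlast p) - 2) = p!(length p - 3)"
          using l2 by (simp add: nth_butlast numeral_3_eq_3)
        ultimately show "butlast p ! (length (butlast p) - 2) \<noteq> hd (rev q)"
          using lastp less.prems qne by (simp add: hd_rev)
      next
        assume "length (rev q) \<ge> 2"
        have "rev q ! 1 = q!(length q - 2)" using 3 by (simp add: rev_nth numeral_2_eq_2)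
        then show "last (butlast p) \<noteq> rev q ! 1" using lbl False by simp
      qed
      have "hd (butlast p) = hd p"
        using bpne hd_append2[of "butlast p" "[last p]"] append_butlast_last_id[OF pne] by simp
      then have "hd z = hd p" using bpne by (simp add: z_def)
      moreover have "last z = hd q" using qne by (simp add: z_def last_rev)
      ultimately have hl: "hd z = last z" using less.prems by simp
      have lz: "length z = length p + length q - 1" using 3 by (simp add: z_def)
      obtain cy where "is_cycle E cy" "length cy + 1 \<le> length z"
        using closed_walk_cycle[OF w nb hl] lz 3 by fastforce
      then show ?thesis using lz 3 by (intro exI[of _ cy]) auto
    qed
  qed
qed


lemma rec_bound:
  fixes V Q :: "nat \<Rightarrow> real" and x d :: real
  assumes x1: "x \<ge> 1" and Q0: "\<forall>j. Q j \<ge> 0" and V1: "V 1 \<ge> d"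
    and rec: "\<forall>j\<ge>1. V (Suc j) \<ge> x * V j - Q j" and j: "j \<ge> 1"
  shows "V (Suc j) \<ge> x^(j-1) * (x*d - (\<Sum>i\<in>{1..j}. Q i))"
  using j
proof (induction j rule: nat_induct_at_least)
  case base
  have "V (Suc 1) \<ge> x * V 1 - Q 1" using rec by blast
  moreover have "x * V 1 \<ge> x * d" using V1 x1 by (simp add: mult_left_mono)
  ultimately show ?case by (simp del: One_nat_def)
next
  case (Suc n)
  let ?B = "\<Sum>i\<in>{1..n}. Q i"
  have "V (Suc (Suc n)) \<ge> x * V (Suc n) - Q (Suc n)" using rec by simp
  moreover have "x * V (Suc n) \<ge> x * (x^(n-1) * (x*d - ?B))" using Suc.IH x1 by (simp add: mult_left_mono)
  moreover have "x * (x^(n-1) * (x*d - ?B)) = x^n * (x*d - ?B)"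
    using Suc.hyps by (metis (no_types) Suc_diff_le diff_Suc_1 mult.assoc power_Suc)
  moreover have "x^n * Q (Suc n) \<ge> Q (Suc n)"
    using Q0 x1 by (metis mult_cancel_right1 mult_right_mono one_le_power)
  moreover have "(\<Sum>i\<in>{1..Suc n}. Q i) = ?B + Q (Suc n)" by simp
  moreover have "Suc n - 1 = n" by simp
  ultimately show ?case by (simp add: algebra_simps)
qed

lemma rec_bound2:
  fixes V Q :: "nat \<Rightarrow> real" and x d B :: real
  assumes x1: "x \<ge> 1" and Q0: "\<forall>j. Q j \<ge> 0" and V1: "V 1 \<ge> d"
    and rec: "\<forall>j\<ge>1. V (Suc j) \<ge> x * V j - Q j" and j: "j \<ge> 1"
    and B: "(\<Sum>i\<in>{1..j}. Q i) \<le> B"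
  shows "V (Suc j) \<ge> x^(j-1) * (x*d - B)"
proof -
  have "x^(j-1) * (x*d - B) \<le> x^(j-1) * (x*d - (\<Sum>i\<in>{1..j}. Q i))"
    using B x1 by (intro mult_left_mono) auto
  then show ?thesis using rec_bound[OF x1 Q0 V1 rec j] by linarith
qed

lemma sum_bound:
  fixes V Q :: "nat \<Rightarrow> real" and x d :: real
  assumes x1: "x \<ge> 1" and Q0: "\<forall>j. Q j \<ge> 0" and V1: "V 1 \<ge> d"
    and rec: "\<forall>j\<ge>1. V (Suc j) \<ge> x * V j - Q j" and n: "n \<ge> 1"
  shows "\<forall>B. (\<Sum>i\<in>{1..n-1}. Q i) \<le> B \<longrightarrow> (\<Sum>j\<in>{1..n}. V j) \<ge> d + (x*d - B) * (\<Sum>i<n-1. x^i)"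
  using n
proof (induction n rule: nat_induct_at_least)
  case base
  then show ?case using V1 by simp
next
  case (Suc n)
  show ?case
  proof (intro allI impI)
    fix B assume B: "(\<Sum>i\<in>{1..Suc n - 1}. Q i) \<le> B"
    have "(\<Sum>i\<in>{1..n-1}. Q i) \<le> (\<Sum>i\<in>{1..n}. Q i)"
      by (rule sum_mono2) (use Q0 in auto)
    then have B': "(\<Sum>i\<in>{1..n-1}. Q i) \<le> B" using B by simp
    have h1: "(\<Sum>j\<in>{1..n}. V j) \<ge> d + (x*d - B) * (\<Sum>i<n-1. x^i)" using Suc.IH B' by blast
    have h2: "V (Suc n) \<ge> x^(n-1) * (x*d - B)"
      using rec_bound2[OF x1 Q0 V1 rec Suc.hyps] B by simp
    have "(\<Sum>j\<in>{1..Suc n}. V j) = (\<Sum>j\<in>{1..n}. V j) + V (Suc n)" by simp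
    moreover have "(\<Sum>i<Suc n - 1. x^i) = (\<Sum>i<n-1. x^i) + x^(n-1)"
      using Suc.hyps by (metis Suc_diff_le diff_Suc_1 sum.lessThan_Suc)
    ultimately show "(\<Sum>j\<in>{1..Suc n}. V j) \<ge> d + (x*d - B) * (\<Sum>i<Suc n - 1. x^i)"
      using h1 h2 by (simp add: algebra_simps)
  qed
qed


locale TS =
  fixes L :: "'v set" and R :: "'c set" and E :: "('v \<times> 'c) set" and S :: "'v set" and dl g :: nat
  assumes tg: "tanner_graph L R E" and lr: "left_regular L E dl" and gi: "has_girth E g" and SL: "S \<subseteq> L"
begin

definition VH where "VH = Inl ` S \<union> Inr ` nbhd E S"
definition hadj where "hadj x y \<longleftrightarrow> tadj E x y \<and> x \<in> VH \<and> y \<in> VH"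
definition Nb where "Nb x = {y. hadj x y}"
definition ext where "ext w = {y. hadj (last w) y \<and> (2 \<le> length w \<longrightarrow> y \<noteq> w ! (length w - 2))}"

primrec W :: "('v + 'c) \<Rightarrow> nat \<Rightarrow> ('v + 'c) list set" where
  "W r 0 = {[r]}"
| "W r (Suc j) = (\<Union>w\<in>W r j. (\<lambda>y. w @ [y]) ` ext w)"

lemma finL: "finite L" and finR: "finite R" and ELR: "E \<subseteq> L \<times> R"
  using tg by (auto simp: tanner_graph_def)

lemma finS: "finite S" using finL SL finite_subset by blast

lemma nbhd_R: "nbhd E S \<subseteq> R" using ELR by (auto simp: nbhd_def)

lemma fin_nbhd: "finite (nbhd E S)" using nbhd_R finR finite_subset by blast

lemma fin_odd: "finite (odd_nbhd E S)" using fin_nbhd by (auto simp: odd_nbhd_def)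

lemma finVH: "finite VH" using finS fin_nbhd by (simp add: VH_def)

lemma hadj_sym: "hadj x y = hadj y x" by (auto simp: hadj_def tadj_sym)

lemma hadj_isl: "hadj x y \<Longrightarrow> isl x \<noteq> isl y"
  by (cases x; cases y) (auto simp: hadj_def)

lemma Nb_Inl: "v \<in> S \<Longrightarrow> Nb (Inl v) = Inr ` {c. (v, c) \<in> E}"
proof (intro equalityI subsetI)
  fix y :: "'v + 'c" assume v: "v \<in> S" and y: "y \<in> Nb (Inl v)"
  then show "y \<in> Inr ` {c. (v, c) \<in> E}" by (cases y) (auto simp: Nb_def hadj_def)
next
  fix y :: "'v + 'c" assume v: "v \<in> S" and y: "y \<in> Inr ` {c. (v, c) \<in> E}"
  then obtain c where "y = Inr c" "(v, c) \<in> E" by auto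
  then show "y \<in> Nb (Inl v)" using v by (auto simp: Nb_def hadj_def VH_def nbhd_def)
qed

lemma Nb_Inr: "Nb (Inr c) = Inl ` {v\<in>S. (v, c) \<in> E}"
proof (intro equalityI subsetI)
  fix y :: "'v + 'c" assume y: "y \<in> Nb (Inr c)"
  then show "y \<in> Inl ` {v\<in>S. (v, c) \<in> E}" by (cases y) (auto simp: Nb_def hadj_def VH_def)
next
  fix y :: "'v + 'c" assume y: "y \<in> Inl ` {v\<in>S. (v, c) \<in> E}"
  then obtain v where "y = Inl v" "(v, c) \<in> E" "v \<in> S" by auto
  then show "y \<in> Nb (Inr c)" by (auto simp: Nb_def hadj_def VH_def nbhd_def)
qed

lemma card_Nb_Inl: "v \<in> S \<Longrightarrow> card (Nb (Inl v)) = dl"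
  using lr SL by (auto simp: Nb_Inl card_image left_regular_def)

lemma card_Nb_Inr: "card (Nb (Inr c)) = sdeg E S c"
  by (simp add: Nb_Inr card_image sdeg_def)

lemma fin_Nb: "finite (Nb x)"
proof -
  have "Nb x \<subseteq> VH" by (auto simp: Nb_def hadj_def)
  then show ?thesis using finVH finite_subset by blast
qed

lemma ext_sub: "ext w \<subseteq> Nb (last w)" by (auto simp: ext_def Nb_def)

lemma fin_ext: "finite (ext w)" using ext_sub fin_Nb finite_subset by blast

lemma card_ext_ge: "card (ext w) \<ge> card (Nb (last w)) - 1"
proof -
  have "Nb (last w) - {w ! (length w - 2)} \<subseteq> ext w" by (auto simp: ext_def Nb_def)
  then have "card (Nb (last w) - {w ! (length w - 2)}) \<le> card (ext w)"
    using fin_ext card_mono by blast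
  moreover have "card (Nb (last w)) - 1 \<le> card (Nb (last w) - {w ! (length w - 2)})"
    using fin_Nb by (simp add: card_Diff_singleton_if)
  ultimately show ?thesis by linarith
qed

lemma ext_single: "ext [r] = Nb r" by (auto simp: ext_def Nb_def)

lemma W_props:
  assumes "r \<in> VH" "w \<in> W r j"
  shows "length w = Suc j \<and> hd w = r \<and> walk E w \<and> nbt w \<and> last w \<in> VH \<and> (isl (last w) \<longleftrightarrow> (isl r \<longleftrightarrow> even j))"
  using assms(2)
proof (induction j arbitrary: w)
  case 0
  then show ?case using assms(1) by (auto simp: walk_def nbt_def)
next
  case (Suc j)
  then obtain w0 y where w: "w = w0 @ [y]" "w0 \<in> W r j" "y \<in> ext w0" by auto
  note IH = Suc.IH[OF w(2)]
  have h: "hadj (last w0) y" using w(3) by (auto simp: ext_def)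
  have w0ne: "w0 \<noteq> []" using IH by auto
  have "walk E w" unfolding w(1)
    by (rule walk_append) (use IH h in \<open>auto simp: walk_def hadj_def\<close>)
  moreover have "nbt w" unfolding w(1)
    by (rule nbt_append) (use IH w(3) w0ne in \<open>auto simp: nbt_def ext_def\<close>)
  moreover have "last w \<in> VH" using h w(1) by (simp add: hadj_def)
  moreover have "isl (last w) \<longleftrightarrow> (isl r \<longleftrightarrow> even (Suc j))"
    using hadj_isl[OF h] IH w(1) by auto
  moreover have "hd w = r" using IH w(1) w0ne by simp
  ultimately show ?case using IH w(1) by simp
qed

lemma W_fin: "finite (W r j)"
  by (induction j) (auto simp: fin_ext)

lemma W_Suc_E: "w \<in> W r (Suc j) \<Longrightarrow> butlast w \<in> W r j \<and> last w \<in> ext (butlast w)"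
  by auto

lemma card_W_Suc: "card (W r (Suc j)) = (\<Sum>w\<in>W r j. card (ext w))"
proof -
  have "card (W r (Suc j)) = (\<Sum>w\<in>W r j. card ((\<lambda>y. w @ [y]) ` ext w))"
    unfolding W.simps
    by (rule card_UN_disjoint) (auto simp: W_fin fin_ext)
  also have "\<dots> = (\<Sum>w\<in>W r j. card (ext w))"
    by (rule sum.cong) (auto intro: card_image inj_onI)
  finally show ?thesis .
qed


declare W.simps(2)[simp del]

lemma girth_le: "is_cycle E cy \<Longrightarrow> g \<le> length cy"
  using gi by (auto simp: has_girth_def)

lemma W_inj:
  assumes r: "r \<in> VH" and p: "p \<in> W r i" and q: "q \<in> W r j" and ne: "p \<noteq> q" and l: "last p = last q"
  shows "g \<le> i + j"
proof -
  note P = W_props[OF r p] and Q = W_props[OF r q]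
  obtain cy where "is_cycle E cy" "length cy + 2 \<le> length p + length q"
    using two_walks_cycle[of E p q] P Q ne l by auto
  then show ?thesis using girth_le P Q by fastforce
qed

lemma count_levels:
  assumes r: "r \<in> VH" and J: "finite J" and f: "inj_on f J" and c: "\<forall>i\<in>J. \<forall>j\<in>J. f i + f j < g"
    and A: "\<forall>j\<in>J. A j \<subseteq> W r (f j)"
  shows "card (\<Union>j\<in>J. last ` A j) = (\<Sum>j\<in>J. card (A j))"
proof -
  have finA: "\<And>j. j \<in> J \<Longrightarrow> finite (A j)" using A W_fin finite_subset by blast
  have "card (\<Union>j\<in>J. last ` A j) = (\<Sum>j\<in>J. card (last ` A j))"
  proof (rule card_UN_disjoint)
    show "finite J" by fact
    show "\<forall>i\<in>J. finite (last ` A i)" using finA by auto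
    show "\<forall>i\<in>J. \<forall>j\<in>J. i \<noteq> j \<longrightarrow> last ` A i \<inter> last ` A j = {}"
    proof (intro ballI impI)
      fix i j assume ij: "i \<in> J" "j \<in> J" "i \<noteq> j"
      show "last ` A i \<inter> last ` A j = {}"
      proof (rule ccontr)
        assume "last ` A i \<inter> last ` A j \<noteq> {}"
        then obtain p q where pq: "p \<in> A i" "q \<in> A j" "last p = last q" by auto
        have "length p = Suc (f i)" "length q = Suc (f j)"
          using W_props[OF r] A ij pq by blast+
        moreover have "f i \<noteq> f j" using f ij by (meson inj_on_eq_iff)
        ultimately have "p \<noteq> q" by auto
        then have "g \<le> f i + f j" using W_inj[OF r, of p "f i" q "f j"] A ij pq by blast
        then show False using c ij by force
      qed
    qed
  qed
  also have "\<dots> = (\<Sum>j\<in>J. card (A j))"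
  proof (rule sum.cong)
    fix j assume j: "j \<in> J"
    have "inj_on last (A j)"
    proof (rule inj_onI)
      fix p q assume "p \<in> A j" "q \<in> A j" "last p = last q"
      then show "p = q" using W_inj[OF r, of p "f j" q "f j"] A j c by force
    qed
    then show "card (last ` A j) = card (A j)" by (rule card_image)
  qed simp
  finally show ?thesis .
qed

lemma fiber_bound:
  assumes r: "r \<in> VH" and gj: "2 * j < g" and vars: "\<forall>w\<in>W r (Suc j). last w \<in> Inl ` S"
  shows "card (W r (Suc j)) \<le> dl * card (last ` W r (Suc j))"
proof -
  let ?W = "W r (Suc j)"
  have fib: "card {w\<in>?W. last w = y} \<le> dl" if y: "y \<in> last ` ?W" for y
  proof -
    from y obtain w0 where w0: "w0 \<in> ?W" "y = last w0" by auto
    then have "y \<in> Inl ` S" using vars by simp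
    then obtain v where v: "y = Inl v" "v \<in> S" by auto
    have "inj_on (\<lambda>w. last (butlast w)) {w\<in>?W. last w = y}"
    proof (rule inj_onI)
      fix p q assume p: "p \<in> {w\<in>?W. last w = y}" and q: "q \<in> {w\<in>?W. last w = y}"
        and e: "last (butlast p) = last (butlast q)"
      have bp: "butlast p \<in> W r j" and bq: "butlast q \<in> W r j" using p q W_Suc_E by auto
      have "butlast p = butlast q"
      proof (rule ccontr)
        assume nq: "butlast p \<noteq> butlast q"
        have "g \<le> j + j" using W_inj[OF r bp bq nq e] .
        then show False using gj by auto
      qed
      moreover have "p \<noteq> []" "q \<noteq> []" using p q W_props[OF r] by fastforce+
      moreover have "last p = last q" using p q by simp
      ultimately show "p = q" by (metis append_butlast_last_id)
    qed
    moreover have "(\<lambda>w. last (butlast w)) ` {w\<in>?W. last w = y} \<subseteq> Nb y"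
    proof
      fix x assume "x \<in> (\<lambda>w. last (butlast w)) ` {w\<in>?W. last w = y}"
      then obtain w where w: "w \<in> ?W" "last w = y" "x = last (butlast w)" by auto
      then have "last w \<in> ext (butlast w)" using W_Suc_E by auto
      then have "hadj x y" using w by (auto simp: ext_def)
      then show "x \<in> Nb y" by (simp add: Nb_def hadj_sym)
    qed
    ultimately have "card {w\<in>?W. last w = y} \<le> card (Nb y)"
      by (rule card_inj_on_le[OF _ _ fin_Nb])
    then show ?thesis using card_Nb_Inl v by simp
  qed
  have eq: "?W = (\<Union>y\<in>last ` ?W. {w\<in>?W. last w = y})" by blast
  have "card (\<Union>y\<in>last ` ?W. {w\<in>?W. last w = y}) \<le> (\<Sum>y\<in>last ` ?W. card {w\<in>?W. last w = y})"
    by (rule card_UN_le) (rule finite_imageI[OF W_fin])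
  moreover have "card ?W = card (\<Union>y\<in>last ` ?W. {w\<in>?W. last w = y})"
    by (rule arg_cong[OF eq])
  ultimately have "card ?W \<le> (\<Sum>y\<in>last ` ?W. card {w\<in>?W. last w = y})"
    by linarith
  also have "\<dots> \<le> (\<Sum>y\<in>last ` ?W. dl)" by (rule sum_mono) (use fib in auto)
  also have "\<dots> = dl * card (last ` ?W)" by simp
  finally show ?thesis .
qed

definition Wo where "Wo r l = {w\<in>W r l. last w \<in> Inr ` odd_nbhd E S}"

lemma Wo_sub: "Wo r l \<subseteq> W r l" by (auto simp: Wo_def)

lemma check_step:
  assumes r: "r \<in> VH" and l: "l \<ge> 1" and chk: "\<forall>w\<in>W r l. \<not> isl (last w)"
  shows "card (W r (Suc l)) + card (Wo r l) \<ge> card (W r l)"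
proof -
  have one: "card (ext w) \<ge> 1" if w: "w \<in> W r l - Wo r l" for w
  proof -
    have wl: "w \<in> W r l" "last w \<notin> Inr ` odd_nbhd E S" using w by (auto simp: Wo_def)
    have "last w \<in> VH" "\<not> isl (last w)" using W_props[OF r wl(1)] chk wl by auto
    then obtain c where c: "last w = Inr c" "c \<in> nbhd E S" by (auto simp: VH_def)
    then have ev: "even (sdeg E S c)" using wl by (auto simp: odd_nbhd_def)
    obtain v where "v \<in> S" "(v, c) \<in> E" using c by (auto simp: nbhd_def)
    then have "{v\<in>S. (v, c) \<in> E} \<noteq> {}" by auto
    moreover have "finite {v\<in>S. (v, c) \<in> E}" using finS by auto
    ultimately have "sdeg E S c \<ge> 1" by (simp add: sdeg_def Suc_leI card_gt_0_iff)
    with ev have "sdeg E S c \<ge> 2" by (cases "sdeg E S c = 1") auto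
    then show ?thesis using card_ext_ge[of w] c card_Nb_Inr by simp
  qed
  have "card (W r l) - card (Wo r l) = card (W r l - Wo r l)"
    using card_Diff_subset[OF finite_subset[OF Wo_sub W_fin] Wo_sub] by simp
  also have "\<dots> = (\<Sum>w\<in>W r l - Wo r l. 1)" by simp
  also have "\<dots> \<le> (\<Sum>w\<in>W r l - Wo r l. card (ext w))" by (rule sum_mono) (use one in auto)
  also have "\<dots> \<le> (\<Sum>w\<in>W r l. card (ext w))" by (rule sum_mono2) (auto simp: W_fin)
  also have "\<dots> = card (W r (Suc l))" by (rule card_W_Suc[symmetric])
  finally show ?thesis by linarith
qed

lemma var_step:
  assumes r: "r \<in> VH" and l: "l \<ge> 1" and var: "\<forall>w\<in>W r l. isl (last w)"
  shows "card (W r (Suc l)) \<ge> (dl - 1) * card (W r l)"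
proof -
  have "(dl - 1) * card (W r l) = (\<Sum>w\<in>W r l. dl - 1)" by simp
  also have "\<dots> \<le> (\<Sum>w\<in>W r l. card (ext w))"
  proof (rule sum_mono)
    fix w assume w: "w \<in> W r l"
    have "last w \<in> VH" "isl (last w)" using W_props[OF r w] var w by auto
    then obtain v where v: "last w = Inl v" "v \<in> S" by (auto simp: VH_def)
    then show "dl - 1 \<le> card (ext w)" using card_ext_ge[of w] card_Nb_Inl by simp
  qed
  also have "\<dots> = card (W r (Suc l))" by (rule card_W_Suc[symmetric])
  finally show ?thesis .
qed

lemma card_W1: "card (W r 1) = card (Nb r)"
proof -
  have "card (W r 1) = card (ext [r])" using card_W_Suc[of r 0] by simp
  then show ?thesis by (simp add: ext_single)
qed


lemma W_disj:
  assumes r: "r \<in> VH" and p: "p \<in> W r i" and q: "q \<in> W r j" and ij: "i \<noteq> j" "i + j < g"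
  shows "last p \<noteq> last q"
proof
  assume e: "last p = last q"
  have "p \<noteq> q" using W_props[OF r p] W_props[OF r q] ij by auto
  then show False using W_inj[OF r p q _ e] ij by auto
qed

lemma var_count:
  assumes r: "r \<in> VH" and J: "finite J" and f: "inj_on f J" and c: "\<forall>i\<in>J. \<forall>j\<in>J. f i + f j < g"
    and var: "\<forall>j\<in>J. \<forall>w\<in>W r (f j). isl (last w)"
  shows "(\<Sum>j\<in>J. card (W r (f j))) \<le> card S"
proof -
  have "(\<Sum>j\<in>J. card (W r (f j))) = card (\<Union>j\<in>J. last ` W r (f j))"
    using count_levels[OF r J f c, of "\<lambda>j. W r (f j)"] by simp
  also have "\<dots> \<le> card (Inl ` S :: ('v + 'c) set)"
  proof (rule card_mono)
    show "finite (Inl ` S :: ('v + 'c) set)" using finS by simp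
    show "(\<Union>j\<in>J. last ` W r (f j)) \<subseteq> Inl ` S"
    proof
      fix y assume "y \<in> (\<Union>j\<in>J. last ` W r (f j))"
      then obtain j w where jw: "j \<in> J" "w \<in> W r (f j)" "y = last w" by auto
      then have "isl y" "y \<in> VH" using var W_props[OF r jw(2)] by auto
      then show "y \<in> Inl ` S" by (auto simp: VH_def)
    qed
  qed
  also have "\<dots> = card S" by (simp add: card_image)
  finally show ?thesis .
qed

lemma var_count_frac:
  assumes r: "r \<in> VH" and J: "finite J" and f: "inj_on f J" and c: "\<forall>i\<in>J. \<forall>j\<in>J. f i + f j < g"
    and var: "\<forall>j\<in>J. \<forall>w\<in>W r (f j). isl (last w)"
    and t: "\<forall>j\<in>J. f j \<noteq> Suc t \<and> f j + Suc t < g" and tg: "2 * t < g"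
    and vart: "\<forall>w\<in>W r (Suc t). isl (last w)" and dl0: "dl > 0"
  shows "real (\<Sum>j\<in>J. card (W r (f j))) + real (card (W r (Suc t))) / real dl \<le> real (card S)"
proof -
  let ?X = "\<Union>j\<in>J. last ` W r (f j)" and ?Y = "last ` W r (Suc t)"
  have X: "card ?X = (\<Sum>j\<in>J. card (W r (f j)))"
    using count_levels[OF r J f c, of "\<lambda>j. W r (f j)"] by simp
  have inS: "y \<in> Inl ` S" if "y \<in> VH" "isl y" for y using that by (auto simp: VH_def)
  have XS: "?X \<subseteq> Inl ` S"
  proof
    fix y assume "y \<in> ?X"
    then obtain j w where jw: "j \<in> J" "w \<in> W r (f j)" "y = last w" by auto
    then show "y \<in> Inl ` S" using var W_props[OF r jw(2)] inS by auto
  qed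
  have YS: "?Y \<subseteq> Inl ` S"
  proof
    fix y assume "y \<in> ?Y"
    then obtain w where jw: "w \<in> W r (Suc t)" "y = last w" by auto
    then show "y \<in> Inl ` S" using vart W_props[OF r jw(1)] inS by auto
  qed
  have disj: "?X \<inter> ?Y = {}"
  proof (rule ccontr)
    assume "?X \<inter> ?Y \<noteq> {}"
    then obtain j p q where "j \<in> J" "p \<in> W r (f j)" "q \<in> W r (Suc t)" "last p = last q" by force
    then show False using W_disj[OF r, of p "f j" q "Suc t"] t by auto
  qed
  have fin: "finite ?X" "finite ?Y" using J W_fin by auto
  have "card ?X + card ?Y = card (?X \<union> ?Y)" using card_Un_disjoint[OF fin disj] by simp
  also have "\<dots> \<le> card (Inl ` S :: ('v + 'c) set)"
    by (rule card_mono) (use finS XS YS in auto)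
  also have "\<dots> = card S" by (simp add: card_image)
  finally have s: "card ?X + card ?Y \<le> card S" .
  have "\<forall>w\<in>W r (Suc t). last w \<in> Inl ` S"
  proof
    fix w assume w: "w \<in> W r (Suc t)"
    then have "last w \<in> VH" using W_props[OF r w] by simp
    then show "last w \<in> Inl ` S" using inS vart w by blast
  qed
  then have fb: "card (W r (Suc t)) \<le> dl * card ?Y" using fiber_bound[OF r tg] by blast
  have "real (card (W r (Suc t))) / real dl \<le> real (card ?Y)"
    using fb dl0 by (simp add: divide_le_eq mult.commute of_nat_mult[symmetric] del: of_nat_mult)
  moreover have "real (card ?X) + real (card ?Y) \<le> real (card S)"
    using s by (simp only: of_nat_add[symmetric] of_nat_le_iff)
  moreover have "real (\<Sum>j\<in>J. card (W r (f j))) = real (card ?X)" using X by simp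
  ultimately show ?thesis by linarith
qed

lemma odd_count:
  assumes r: "r \<in> VH" and J: "finite J" and f: "inj_on f J" and c: "\<forall>i\<in>J. \<forall>j\<in>J. f i + f j < g"
  shows "(\<Sum>j\<in>J. card (Wo r (f j))) \<le> card (odd_nbhd E S)"
proof -
  have "(\<Sum>j\<in>J. card (Wo r (f j))) = card (\<Union>j\<in>J. last ` Wo r (f j))"
    using count_levels[OF r J f c, of "\<lambda>j. Wo r (f j)"] Wo_sub by simp
  also have "\<dots> \<le> card (Inr ` odd_nbhd E S :: ('v + 'c) set)"
    by (rule card_mono) (use fin_odd in \<open>auto simp: Wo_def\<close>)
  also have "\<dots> = card (odd_nbhd E S)" by (simp add: card_image)
  finally show ?thesis .
qed

lemma W1_last: "w \<in> W r 1 \<Longrightarrow> last w \<in> Nb r"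
  using W_Suc_E[of w r 0] ext_single by auto


context
  fixes c :: 'c
  assumes c: "c \<in> nbhd E S" and dl2: "dl \<ge> 2"
begin

lemma rcVH: "Inr c \<in> VH" using c by (simp add: VH_def)

lemma par_c: "w \<in> W (Inr c) l \<Longrightarrow> isl (last w) \<longleftrightarrow> odd l"
  using W_props[OF rcVH] by auto

lemma MC_rec: "\<forall>j\<ge>1. real (card (W (Inr c) (2 * Suc j - 1))) \<ge>
   (real dl - 1) * real (card (W (Inr c) (2 * j - 1))) - real (card (Wo (Inr c) (2 * j)))"
proof (intro allI impI)
  fix j :: nat assume j: "j \<ge> 1"
  have a1: "card (W (Inr c) (Suc (2*j-1))) \<ge> (dl-1) * card (W (Inr c) (2*j-1))"
    by (rule var_step[OF rcVH]) (use j par_c in auto)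
  have a2: "card (W (Inr c) (Suc (2*j))) + card (Wo (Inr c) (2*j)) \<ge> card (W (Inr c) (2*j))"
    by (rule check_step[OF rcVH]) (use j par_c in auto)
  have e1: "Suc (2*j-1) = 2*j" "2 * Suc j - 1 = Suc (2*j)" using j by auto
  have r1: "real (card (W (Inr c) (2*j))) \<ge> real (dl - 1) * real (card (W (Inr c) (2*j-1)))"
    using a1 e1 by (metis of_nat_le_iff of_nat_mult)
  have r2: "real (card (W (Inr c) (Suc (2*j)))) + real (card (Wo (Inr c) (2*j))) \<ge> real (card (W (Inr c) (2*j)))"
    using a2 by (metis of_nat_add of_nat_le_iff)
  have "real (dl - 1) = real dl - 1" using dl2 by simp
  then show "real (card (W (Inr c) (2 * Suc j - 1))) \<ge>
   (real dl - 1) * real (card (W (Inr c) (2 * j - 1))) - real (card (Wo (Inr c) (2 * j)))"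
    using r1 r2 e1 by simp
qed

lemma MC_V1: "real (card (W (Inr c) (2 * 1 - 1))) = real (sdeg E S c)"
  using card_W1[of "Inr c"] card_Nb_Inr by simp


lemma MC_odd:
  assumes m: "4 * m < g"
  shows "(\<Sum>j\<in>{1..m}. real (card (Wo (Inr c) (2 * j)))) \<le> real (card (odd_nbhd E S)) - (if c \<in> odd_nbhd E S then 1 else (0::real))"
proof -
  have "(\<Sum>j\<in>{0..m}. card (Wo (Inr c) (2 * j))) \<le> card (odd_nbhd E S)"
    by (rule odd_count[OF rcVH]) (use m in \<open>auto simp: inj_on_def\<close>)
  moreover have "(\<Sum>j\<in>{0..m}. card (Wo (Inr c) (2 * j))) = card (Wo (Inr c) 0) + (\<Sum>j\<in>{1..m}. card (Wo (Inr c) (2 * j)))"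
    by (simp add: sum.atLeast_Suc_atMost)
  moreover have "Wo (Inr c) 0 = (if c \<in> odd_nbhd E S then {[Inr c]} else {})"
    by (auto simp: Wo_def)
  then have "real (card (Wo (Inr c) 0)) = (if c \<in> odd_nbhd E S then 1 else (0::real))"
    by simp
  ultimately have "real (card (Wo (Inr c) 0)) + real (\<Sum>j\<in>{1..m}. card (Wo (Inr c) (2 * j))) \<le> real (card (odd_nbhd E S))"
    by (simp only: of_nat_add[symmetric] of_nat_le_iff)
  moreover have "real (\<Sum>j\<in>{1..m}. card (Wo (Inr c) (2 * j))) = (\<Sum>j\<in>{1..m}. real (card (Wo (Inr c) (2 * j))))"
    by (rule of_nat_sum)
  ultimately show ?thesis using \<open>real (card (Wo (Inr c) 0)) = (if c \<in> odd_nbhd E S then 1 else (0::real))\<close> by linarith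
qed

lemma MC_var:
  assumes n: "4 * n < g + 2"
  shows "real (\<Sum>j\<in>{1..n}. card (W (Inr c) (2 * j - 1))) \<le> real (card S)"
proof -
  have "(\<Sum>j\<in>{1..n}. card (W (Inr c) (2 * j - 1))) \<le> card S"
    by (rule var_count[OF rcVH]) (use n par_c in \<open>auto simp: inj_on_def\<close>)
  then show ?thesis by (simp only: of_nat_le_iff)
qed

lemma MC_frac:
  assumes n: "4 * n < g" and dl0: "dl > 0"
  shows "real (\<Sum>j\<in>{1..n}. card (W (Inr c) (2 * j - 1))) + real (card (W (Inr c) (Suc (2 * n)))) / real dl \<le> real (card S)"
  by (rule var_count_frac[OF rcVH]) (use n par_c dl0 in \<open>auto simp: inj_on_def\<close>)

lemma MC1:
  assumes n: "n \<ge> 1" "4 * n < g + 2"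
  shows "real (card S) \<ge> real (sdeg E S c) + ((real dl - 1) * real (sdeg E S c) - (real (card (odd_nbhd E S)) - (if c \<in> odd_nbhd E S then 1 else (0::real)))) * (\<Sum>i<n-1. (real dl - 1)^i)"
proof -
  define V where "V j = real (card (W (Inr c) (2 * j - 1)))" for j
  define Q where "Q j = real (card (Wo (Inr c) (2 * j)))" for j
  have x1: "real dl - 1 \<ge> 1" using dl2 by simp
  have Q0: "\<forall>j. Q j \<ge> 0" by (simp add: Q_def)
  have V1: "V 1 \<ge> real (sdeg E S c)" using MC_V1 by (simp add: V_def)
  have rec: "\<forall>j\<ge>1. V (Suc j) \<ge> (real dl - 1) * V j - Q j" using MC_rec by (simp add: V_def Q_def)
  have B: "(\<Sum>i\<in>{1..n-1}. Q i) \<le> real (card (odd_nbhd E S)) - (if c \<in> odd_nbhd E S then 1 else (0::real))"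
    using MC_odd[of "n - 1"] n by (simp add: Q_def)
  have "(\<Sum>j\<in>{1..n}. V j) \<ge> real (sdeg E S c) + ((real dl - 1) * real (sdeg E S c) - (real (card (odd_nbhd E S)) - (if c \<in> odd_nbhd E S then 1 else (0::real)))) * (\<Sum>i<n-1. (real dl - 1)^i)"
    using sum_bound[OF x1 Q0 V1 rec n(1)] B by blast
  moreover have "(\<Sum>j\<in>{1..n}. V j) \<le> real (card S)"
    using MC_var[OF n(2)] by (simp add: V_def)
  ultimately show ?thesis by linarith
qed

lemma MC2:
  assumes n: "n \<ge> 1" "4 * n < g"
  shows "real (card S) \<ge> real (sdeg E S c) + ((real dl - 1) * real (sdeg E S c) - (real (card (odd_nbhd E S)) - (if c \<in> odd_nbhd E S then 1 else (0::real)))) * (\<Sum>i<n-1. (real dl - 1)^i)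
     + (real dl - 1)^(n-1) * ((real dl - 1) * real (sdeg E S c) - (real (card (odd_nbhd E S)) - (if c \<in> odd_nbhd E S then 1 else (0::real)))) / real dl"
proof -
  define V where "V j = real (card (W (Inr c) (2 * j - 1)))" for j
  define Q where "Q j = real (card (Wo (Inr c) (2 * j)))" for j
  have x1: "real dl - 1 \<ge> 1" using dl2 by simp
  have Q0: "\<forall>j. Q j \<ge> 0" by (simp add: Q_def)
  have V1: "V 1 \<ge> real (sdeg E S c)" using MC_V1 by (simp add: V_def)
  have rec: "\<forall>j\<ge>1. V (Suc j) \<ge> (real dl - 1) * V j - Q j" using MC_rec by (simp add: V_def Q_def)
  have B: "(\<Sum>i\<in>{1..n-1}. Q i) \<le> real (card (odd_nbhd E S)) - (if c \<in> odd_nbhd E S then 1 else (0::real))"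
    using MC_odd[of "n - 1"] n by (simp add: Q_def)
  have B2: "(\<Sum>i\<in>{1..n}. Q i) \<le> real (card (odd_nbhd E S)) - (if c \<in> odd_nbhd E S then 1 else (0::real))"
    using MC_odd[of "n"] n by (simp add: Q_def)
  have s1: "(\<Sum>j\<in>{1..n}. V j) \<ge> real (sdeg E S c) + ((real dl - 1) * real (sdeg E S c) - (real (card (odd_nbhd E S)) - (if c \<in> odd_nbhd E S then 1 else (0::real)))) * (\<Sum>i<n-1. (real dl - 1)^i)"
    using sum_bound[OF x1 Q0 V1 rec n(1)] B by blast
  have s2: "V (Suc n) \<ge> (real dl - 1)^(n-1) * ((real dl - 1) * real (sdeg E S c) - (real (card (odd_nbhd E S)) - (if c \<in> odd_nbhd E S then 1 else (0::real))))"
    by (rule rec_bound2[OF x1 Q0 V1 rec n(1) B2])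
  have dl0: "real dl > 0" using dl2 by simp
  have s3: "V (Suc n) / real dl \<ge> (real dl - 1)^(n-1) * ((real dl - 1) * real (sdeg E S c) - (real (card (odd_nbhd E S)) - (if c \<in> odd_nbhd E S then 1 else (0::real)))) / real dl"
    using s2 dl0 by (simp add: divide_right_mono)
  have "2 * Suc n - 1 = Suc (2 * n)" by simp
  then have "(\<Sum>j\<in>{1..n}. V j) + V (Suc n) / real dl \<le> real (card S)"
    using MC_frac[OF n(2)] dl2 by (simp add: V_def)
  then show ?thesis using s1 s3 by linarith
qed

end

context
  fixes v :: 'v
  assumes v: "v \<in> S" and vev: "\<forall>c. (v, c) \<in> E \<longrightarrow> c \<notin> odd_nbhd E S" and dl2v: "dl \<ge> 2"
begin

lemma rvVH: "Inl v \<in> VH" using v by (simp add: VH_def)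

lemma par_v: "w \<in> W (Inl v) l \<Longrightarrow> isl (last w) \<longleftrightarrow> even l"
  using W_props[OF rvVH] by auto

lemma MV_rec: "\<forall>j\<ge>1. real (card (W (Inl v) (2 * Suc j))) \<ge>
   (real dl - 1) * real (card (W (Inl v) (2 * j))) - real (card (Wo (Inl v) (2 * j + 1)))"
proof (intro allI impI)
  fix j :: nat assume j: "j \<ge> 1"
  have a1: "card (W (Inl v) (Suc (2*j))) \<ge> (dl-1) * card (W (Inl v) (2*j))"
    by (rule var_step[OF rvVH]) (use j par_v in auto)
  have a2: "card (W (Inl v) (Suc (2*j+1))) + card (Wo (Inl v) (2*j+1)) \<ge> card (W (Inl v) (2*j+1))"
    by (rule check_step[OF rvVH]) (use j par_v in auto)
  have e1: "2 * Suc j = Suc (2*j+1)" by simp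
  have r1: "real (card (W (Inl v) (2*j+1))) \<ge> real (dl - 1) * real (card (W (Inl v) (2*j)))"
    using a1 by (metis Suc_eq_plus1 of_nat_le_iff of_nat_mult)
  have r2: "real (card (W (Inl v) (Suc (2*j+1)))) + real (card (Wo (Inl v) (2*j+1))) \<ge> real (card (W (Inl v) (2*j+1)))"
    using a2 by (metis of_nat_add of_nat_le_iff)
  have "real (dl - 1) = real dl - 1" using dl2v by simp
  then show "real (card (W (Inl v) (2 * Suc j))) \<ge>
   (real dl - 1) * real (card (W (Inl v) (2 * j))) - real (card (Wo (Inl v) (2 * j + 1)))"
    using r1 r2 e1 by simp
qed

lemma MV_V1: "real (card (W (Inl v) (2 * 1))) \<ge> real dl"
proof -
  have a2: "card (W (Inl v) (Suc 1)) + card (Wo (Inl v) 1) \<ge> card (W (Inl v) 1)"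
    by (rule check_step[OF rvVH]) (use par_v in auto)
  have "Wo (Inl v) 1 = {}"
  proof (rule ccontr)
    assume "Wo (Inl v) 1 \<noteq> {}"
    then obtain w where w: "w \<in> W (Inl v) 1" "last w \<in> Inr ` odd_nbhd E S" by (auto simp: Wo_def)
    then have "last w \<in> Inr ` {c. (v, c) \<in> E}" using W1_last Nb_Inl[OF v] by auto
    then show False using w vev by auto
  qed
  moreover have "card (W (Inl v) 1) = dl" using card_W1 card_Nb_Inl[OF v] by simp
  ultimately show ?thesis using a2 by (simp add: numeral_2_eq_2)
qed

lemma MV_odd:
  assumes m: "4 * m + 2 < g"
  shows "(\<Sum>j\<in>{1..m}. real (card (Wo (Inl v) (2 * j + 1)))) \<le> real (card (odd_nbhd E S))"
proof -
  have "(\<Sum>j\<in>{1..m}. card (Wo (Inl v) (2 * j + 1))) \<le> card (odd_nbhd E S)"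
    by (rule odd_count[OF rvVH]) (use m in \<open>auto simp: inj_on_def\<close>)
  then have "real (\<Sum>j\<in>{1..m}. card (Wo (Inl v) (2 * j + 1))) \<le> real (card (odd_nbhd E S))"
    by (simp only: of_nat_le_iff)
  then show ?thesis by simp
qed

lemma MV_var:
  assumes n: "4 * n < g"
  shows "1 + (\<Sum>j\<in>{1..n}. real (card (W (Inl v) (2 * j)))) \<le> real (card S)"
proof -
  have "(\<Sum>j\<in>{0..n}. card (W (Inl v) (2 * j))) \<le> card S"
    by (rule var_count[OF rvVH]) (use n par_v in \<open>auto simp: inj_on_def\<close>)
  moreover have "(\<Sum>j\<in>{0..n}. card (W (Inl v) (2 * j))) = 1 + (\<Sum>j\<in>{1..n}. card (W (Inl v) (2 * j)))"
    by (simp add: sum.atLeast_Suc_atMost)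
  ultimately have "real (1 + (\<Sum>j\<in>{1..n}. card (W (Inl v) (2 * j)))) \<le> real (card S)"
    by (simp only: of_nat_le_iff)
  then show ?thesis by simp
qed

lemma MV_frac:
  assumes n: "4 * n + 2 < g"
  shows "1 + (\<Sum>j\<in>{1..n}. real (card (W (Inl v) (2 * j)))) + real (card (W (Inl v) (Suc (2 * n + 1)))) / real dl \<le> real (card S)"
proof -
  have "real (\<Sum>j\<in>{0..n}. card (W (Inl v) (2 * j))) + real (card (W (Inl v) (Suc (2 * n + 1)))) / real dl \<le> real (card S)"
    by (rule var_count_frac[OF rvVH]) (use n par_v dl2v in \<open>auto simp: inj_on_def\<close>)
  moreover have "(\<Sum>j\<in>{0..n}. card (W (Inl v) (2 * j))) = 1 + (\<Sum>j\<in>{1..n}. card (W (Inl v) (2 * j)))"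
    by (simp add: sum.atLeast_Suc_atMost)
  ultimately show ?thesis by simp
qed

lemma MV1:
  assumes n: "n \<ge> 1" "4 * n < g"
  shows "real (card S) \<ge> 1 + real dl + ((real dl - 1) * real dl - real (card (odd_nbhd E S))) * (\<Sum>i<n-1. (real dl - 1)^i)"
proof -
  define V where "V j = real (card (W (Inl v) (2 * j)))" for j
  define Q where "Q j = real (card (Wo (Inl v) (2 * j + 1)))" for j
  have x1: "real dl - 1 \<ge> 1" using dl2v by simp
  have Q0: "\<forall>j. Q j \<ge> 0" by (simp add: Q_def)
  have V1: "V 1 \<ge> real dl" using MV_V1 by (simp add: V_def)
  have rec: "\<forall>j\<ge>1. V (Suc j) \<ge> (real dl - 1) * V j - Q j" using MV_rec by (simp add: V_def Q_def)
  have B: "(\<Sum>i\<in>{1..n-1}. Q i) \<le> real (card (odd_nbhd E S))"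
    using MV_odd[of "n - 1"] n by (simp add: Q_def)
  have "(\<Sum>j\<in>{1..n}. V j) \<ge> real dl + ((real dl - 1) * real dl - real (card (odd_nbhd E S))) * (\<Sum>i<n-1. (real dl - 1)^i)"
    using sum_bound[OF x1 Q0 V1 rec n(1)] B by blast
  moreover have "1 + (\<Sum>j\<in>{1..n}. V j) \<le> real (card S)"
    using MV_var[OF n(2)] by (simp add: V_def)
  ultimately show ?thesis by linarith
qed

lemma MV2:
  assumes n: "n \<ge> 1" "4 * n + 2 < g"
  shows "real (card S) \<ge> 1 + real dl + ((real dl - 1) * real dl - real (card (odd_nbhd E S))) * (\<Sum>i<n-1. (real dl - 1)^i)
     + (real dl - 1)^(n-1) * ((real dl - 1) * real dl - real (card (odd_nbhd E S))) / real dl"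
proof -
  define V where "V j = real (card (W (Inl v) (2 * j)))" for j
  define Q where "Q j = real (card (Wo (Inl v) (2 * j + 1)))" for j
  have x1: "real dl - 1 \<ge> 1" using dl2v by simp
  have Q0: "\<forall>j. Q j \<ge> 0" by (simp add: Q_def)
  have V1: "V 1 \<ge> real dl" using MV_V1 by (simp add: V_def)
  have rec: "\<forall>j\<ge>1. V (Suc j) \<ge> (real dl - 1) * V j - Q j" using MV_rec by (simp add: V_def Q_def)
  have B: "(\<Sum>i\<in>{1..n-1}. Q i) \<le> real (card (odd_nbhd E S))"
    using MV_odd[of "n - 1"] n by (simp add: Q_def)
  have B2: "(\<Sum>i\<in>{1..n}. Q i) \<le> real (card (odd_nbhd E S))"
    using MV_odd[of "n"] n by (simp add: Q_def)
  have s1: "(\<Sum>j\<in>{1..n}. V j) \<ge> real dl + ((real dl - 1) * real dl - real (card (odd_nbhd E S))) * (\<Sum>i<n-1. (real dl - 1)^i)"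
    using sum_bound[OF x1 Q0 V1 rec n(1)] B by blast
  have s2: "V (Suc n) \<ge> (real dl - 1)^(n-1) * ((real dl - 1) * real dl - real (card (odd_nbhd E S)))"
    by (rule rec_bound2[OF x1 Q0 V1 rec n(1) B2])
  have dl0: "real dl > 0" using dl2v by simp
  have s3: "V (Suc n) / real dl \<ge> (real dl - 1)^(n-1) * ((real dl - 1) * real dl - real (card (odd_nbhd E S))) / real dl"
    using s2 dl0 by (simp add: divide_right_mono)
  have "2 * Suc n = Suc (2 * n + 1)" by simp
  then have "1 + (\<Sum>j\<in>{1..n}. V j) + V (Suc n) / real dl \<le> real (card S)"
    using MV_frac[OF n(2)] by (simp add: V_def)
  then show ?thesis using s1 s3 by linarith
qed

end

end

lemma elem_root:
  assumes el: "elementary E S" and fS: "finite S" and fo: "finite (odd_nbhd E S)"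
    and lt: "card (odd_nbhd E S) < card S"
  shows "\<exists>v\<in>S. \<forall>c. (v, c) \<in> E \<longrightarrow> c \<notin> odd_nbhd E S"
proof (rule ccontr)
  assume "\<not> ?thesis"
  then have all: "\<forall>v\<in>S. \<exists>c. (v, c) \<in> E \<and> c \<in> odd_nbhd E S" by blast
  define f where "f u = (SOME c. (u, c) \<in> E \<and> c \<in> odd_nbhd E S)" for u
  have f: "(u, f u) \<in> E \<and> f u \<in> odd_nbhd E S" if "u \<in> S" for u
    unfolding f_def using all that by (metis (mono_tags, lifting) someI_ex)
  have "inj_on f S"
  proof (rule inj_onI)
    fix u u' assume u: "u \<in> S" "u' \<in> S" "f u = f u'"
    let ?c = "f u"
    have c: "?c \<in> odd_nbhd E S" "(u, ?c) \<in> E" "(u', ?c) \<in> E" using f[OF u(1)] f[OF u(2)] u(3) by auto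
    then have "?c \<in> nbhd E S" "odd (sdeg E S ?c)" by (auto simp: odd_nbhd_def)
    then have "sdeg E S ?c = 1" using el by (auto simp: elementary_def)
    then have "card {v\<in>S. (v, ?c) \<in> E} = 1" by (simp add: sdeg_def)
    then obtain x where "{v\<in>S. (v, ?c) \<in> E} = {x}" by (rule card_1_singletonE)
    moreover have "u \<in> {v\<in>S. (v, ?c) \<in> E}" "u' \<in> {v\<in>S. (v, ?c) \<in> E}" using c u by auto
    ultimately show "u = u'" by (metis singletonD)
  qed
  moreover have "f ` S \<subseteq> odd_nbhd E S" using f by auto
  ultimately have "card S \<le> card (odd_nbhd E S)" using card_inj_on_le fo by blast
  then show False using lt by simp
qed

theorem lemma7:
  fixes L :: "'v set" and R :: "'c set" and E :: "('v \<times> 'c) set"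
    and dl g a b :: nat and S :: "'v set"
  assumes "tanner_graph L R E"
    and "left_regular L E dl" and "dl \<ge> 3"
    and "has_girth E g" and "g > 4"
    and "trapping_set L E S a b" and "b < a"
    and "induced_connected E S"
  shows
   "(\<forall>k::nat. g = 4 * k \<and> k > 1 \<longrightarrow>
      ((elementary E S \<and> dl * (dl - 1) > b \<longrightarrow>
         real a \<ge> 1 + real dl + (real dl * (real dl - 1) - real b) * (\<Sum>i<k-2. (real dl - 1) ^ i)
                  + (real dl * (real dl - 1) - real b) * (real dl - 1) ^ (k - 2) / real dl)
     \<and> (\<forall>c d_o. c \<in> odd_nbhd E S \<and> sdeg E S c = d_o \<and> d_o > 1 \<and> d_o * (dl - 1) > b \<longrightarrow>
         real a \<ge> real d_o + (real d_o * (real dl - 1) - real b + 1) * (\<Sum>i<k-1. (real dl - 1) ^ i))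
     \<and> (\<forall>c d_e. c \<in> even_nbhd E S \<and> sdeg E S c = d_e \<and> d_e > 2 \<and> d_e * (dl - 1) > b \<longrightarrow>
         real a \<ge> real d_e + (real d_e * (real dl - 1) - real b) * (\<Sum>i<k-1. (real dl - 1) ^ i))))
  \<and> (\<forall>k::nat. g = 4 * k + 2 \<and> k > 0 \<longrightarrow>
      ((elementary E S \<and> dl * (dl - 1) > b \<longrightarrow>
         real a \<ge> 1 + real dl + (real dl * (real dl - 1) - real b) * (\<Sum>i<k-1. (real dl - 1) ^ i))
     \<and> (\<forall>c d_o. c \<in> odd_nbhd E S \<and> sdeg E S c = d_o \<and> d_o > 1 \<and> d_o * (dl - 1) > b \<longrightarrow>
         real a \<ge> real d_o + (real d_o * (real dl - 1) - real b + 1) * (\<Sum>i<k-1. (real dl - 1) ^ i)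
                  + (real d_o * (real dl - 1) - real b + 1) * (real dl - 1) ^ (k - 1) / real dl)
     \<and> (\<forall>c d_e. c \<in> even_nbhd E S \<and> sdeg E S c = d_e \<and> d_e > 2 \<and> d_e * (dl - 1) > b \<longrightarrow>
         real a \<ge> real d_e + (real d_e * (real dl - 1) - real b) * (\<Sum>i<k-1. (real dl - 1) ^ i)
                  + (real d_e * (real dl - 1) - real b) * (real dl - 1) ^ (k - 1) / real dl)))"
proof -
  have SL: "S \<subseteq> L" and ca: "card S = a" and cb: "card (odd_nbhd E S) = b"
    using assms(6) by (auto simp: trapping_set_def)
  interpret T: TS L R E S dl g
    by unfold_locales (use assms SL in auto)
  have dl2: "dl \<ge> 2" using assms(3) by simp
  have odd_nb: "c \<in> nbhd E S" if "c \<in> odd_nbhd E S" for c using that by (simp add: odd_nbhd_def)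
  have even_nb: "c \<in> nbhd E S" "c \<notin> odd_nbhd E S" if "c \<in> even_nbhd E S" for c
    using that by (auto simp: odd_nbhd_def even_nbhd_def)
  have vex: "elementary E S \<Longrightarrow> \<exists>v\<in>S. \<forall>c. (v, c) \<in> E \<longrightarrow> c \<notin> odd_nbhd E S"
    using elem_root[of E S] T.finS T.fin_odd assms(7) ca cb by simp
  show ?thesis
  proof (rule conjI; rule allI; rule impI; intro conjI)
    fix k :: nat assume k: "g = 4 * k \<and> k > 1"
    show "elementary E S \<and> dl * (dl - 1) > b \<longrightarrow>
         real a \<ge> 1 + real dl + (real dl * (real dl - 1) - real b) * (\<Sum>i<k-2. (real dl - 1) ^ i)
                  + (real dl * (real dl - 1) - real b) * (real dl - 1) ^ (k - 2) / real dl"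
    proof
      assume "elementary E S \<and> dl * (dl - 1) > b"
      then obtain v where v: "v \<in> S" "\<forall>c. (v, c) \<in> E \<longrightarrow> c \<notin> odd_nbhd E S" using vex by blast
      have h: "real (card S) \<ge> 1 + real dl + ((real dl - 1) * real dl - real (card (odd_nbhd E S))) * (\<Sum>i<k-1-1. (real dl - 1)^i)
     + (real dl - 1)^(k-1-1) * ((real dl - 1) * real dl - real (card (odd_nbhd E S))) / real dl"
        by (rule T.MV2[OF v dl2]) (use k in auto)
      have e: "k - 1 - 1 = k - 2" by simp
      show "real a \<ge> 1 + real dl + (real dl * (real dl - 1) - real b) * (\<Sum>i<k-2. (real dl - 1) ^ i)
                  + (real dl * (real dl - 1) - real b) * (real dl - 1) ^ (k - 2) / real dl"
        using h unfolding e ca cb by (simp add: algebra_simps)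
    qed
  next
    fix k :: nat assume k: "g = 4 * k \<and> k > 1"
    show "\<forall>c d_o. c \<in> odd_nbhd E S \<and> sdeg E S c = d_o \<and> d_o > 1 \<and> d_o * (dl - 1) > b \<longrightarrow>
         real a \<ge> real d_o + (real d_o * (real dl - 1) - real b + 1) * (\<Sum>i<k-1. (real dl - 1) ^ i)"
    proof (intro allI impI)
      fix c d_o assume c: "c \<in> odd_nbhd E S \<and> sdeg E S c = d_o \<and> d_o > 1 \<and> d_o * (dl - 1) > b"
      have h: "real (card S) \<ge> real (sdeg E S c) + ((real dl - 1) * real (sdeg E S c) - (real (card (odd_nbhd E S)) - (if c \<in> odd_nbhd E S then 1 else (0::real)))) * (\<Sum>i<k-1. (real dl - 1)^i)"
        by (rule T.MC1[OF odd_nb dl2]) (use k c in auto)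
      then show "real a \<ge> real d_o + (real d_o * (real dl - 1) - real b + 1) * (\<Sum>i<k-1. (real dl - 1) ^ i)"
        using c ca cb by (simp add: algebra_simps)
    qed
  next
    fix k :: nat assume k: "g = 4 * k \<and> k > 1"
    show "\<forall>c d_e. c \<in> even_nbhd E S \<and> sdeg E S c = d_e \<and> d_e > 2 \<and> d_e * (dl - 1) > b \<longrightarrow>
         real a \<ge> real d_e + (real d_e * (real dl - 1) - real b) * (\<Sum>i<k-1. (real dl - 1) ^ i)"
    proof (intro allI impI)
      fix c d_e assume c: "c \<in> even_nbhd E S \<and> sdeg E S c = d_e \<and> d_e > 2 \<and> d_e * (dl - 1) > b"
      have h: "real (card S) \<ge> real (sdeg E S c) + ((real dl - 1) * real (sdeg E S c) - (real (card (odd_nbhd E S)) - (if c \<in> odd_nbhd E S then 1 else (0::real)))) * (\<Sum>i<k-1. (real dl - 1)^i)"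
        by (rule T.MC1[OF even_nb(1) dl2]) (use k c in auto)
      then show "real a \<ge> real d_e + (real d_e * (real dl - 1) - real b) * (\<Sum>i<k-1. (real dl - 1) ^ i)"
        using c even_nb[of c] ca cb by (simp add: algebra_simps)
    qed
  next
    fix k :: nat assume k: "g = 4 * k + 2 \<and> k > 0"
    show "elementary E S \<and> dl * (dl - 1) > b \<longrightarrow>
         real a \<ge> 1 + real dl + (real dl * (real dl - 1) - real b) * (\<Sum>i<k-1. (real dl - 1) ^ i)"
    proof
      assume "elementary E S \<and> dl * (dl - 1) > b"
      then obtain v where v: "v \<in> S" "\<forall>c. (v, c) \<in> E \<longrightarrow> c \<notin> odd_nbhd E S" using vex by blast
      have h: "real (card S) \<ge> 1 + real dl + ((real dl - 1) * real dl - real (card (odd_nbhd E S))) * (\<Sum>i<k-1. (real dl - 1)^i)"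
        by (rule T.MV1[OF v dl2]) (use k in auto)
      then show "real a \<ge> 1 + real dl + (real dl * (real dl - 1) - real b) * (\<Sum>i<k-1. (real dl - 1) ^ i)"
        unfolding ca cb by (simp add: algebra_simps)
    qed
  next
    fix k :: nat assume k: "g = 4 * k + 2 \<and> k > 0"
    show "\<forall>c d_o. c \<in> odd_nbhd E S \<and> sdeg E S c = d_o \<and> d_o > 1 \<and> d_o * (dl - 1) > b \<longrightarrow>
         real a \<ge> real d_o + (real d_o * (real dl - 1) - real b + 1) * (\<Sum>i<k-1. (real dl - 1) ^ i)
                  + (real d_o * (real dl - 1) - real b + 1) * (real dl - 1) ^ (k - 1) / real dl"
    proof (intro allI impI)
      fix c d_o assume c: "c \<in> odd_nbhd E S \<and> sdeg E S c = d_o \<and> d_o > 1 \<and> d_o * (dl - 1) > b"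
      have h: "real (card S) \<ge> real (sdeg E S c) + ((real dl - 1) * real (sdeg E S c) - (real (card (odd_nbhd E S)) - (if c \<in> odd_nbhd E S then 1 else (0::real)))) * (\<Sum>i<k-1. (real dl - 1)^i)
     + (real dl - 1)^(k-1) * ((real dl - 1) * real (sdeg E S c) - (real (card (odd_nbhd E S)) - (if c \<in> odd_nbhd E S then 1 else (0::real)))) / real dl"
        by (rule T.MC2[OF odd_nb dl2]) (use k c in auto)
      then show "real a \<ge> real d_o + (real d_o * (real dl - 1) - real b + 1) * (\<Sum>i<k-1. (real dl - 1) ^ i)
                  + (real d_o * (real dl - 1) - real b + 1) * (real dl - 1) ^ (k - 1) / real dl"
        using c ca cb by (simp add: algebra_simps)
    qed
  next
    fix k :: nat assume k: "g = 4 * k + 2 \<and> k > 0"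
    show "\<forall>c d_e. c \<in> even_nbhd E S \<and> sdeg E S c = d_e \<and> d_e > 2 \<and> d_e * (dl - 1) > b \<longrightarrow>
         real a \<ge> real d_e + (real d_e * (real dl - 1) - real b) * (\<Sum>i<k-1. (real dl - 1) ^ i)
                  + (real d_e * (real dl - 1) - real b) * (real dl - 1) ^ (k - 1) / real dl"
    proof (intro allI impI)
      fix c d_e assume c: "c \<in> even_nbhd E S \<and> sdeg E S c = d_e \<and> d_e > 2 \<and> d_e * (dl - 1) > b"
      have h: "real (card S) \<ge> real (sdeg E S c) + ((real dl - 1) * real (sdeg E S c) - (real (card (odd_nbhd E S)) - (if c \<in> odd_nbhd E S then 1 else (0::real)))) * (\<Sum>i<k-1. (real dl - 1)^i)
     + (real dl - 1)^(k-1) * ((real dl - 1) * real (sdeg E S c) - (real (card (odd_nbhd E S)) - (if c \<in> odd_nbhd E S then 1 else (0::real)))) / real dl"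
        by (rule T.MC2[OF even_nb(1) dl2]) (use k c in auto)
      then show "real a \<ge> real d_e + (real d_e * (real dl - 1) - real b) * (\<Sum>i<k-1. (real dl - 1) ^ i)
                  + (real d_e * (real dl - 1) - real b) * (real dl - 1) ^ (k - 1) / real dl"
        using c even_nb[of c] ca cb by (simp add: algebra_simps)
    qed
  qed
qed

end
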